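(* Let $(n_0^{(m)},n_1^{(m)})_{m\ge 1}$ be a sequence of pairs of integers with $2\le n_0^{(m)}\le n_1^{(m)}$, $n_1^{(m)}\to\infty$, and $n_0^{(m)}=(\log n_1^{(m)})^{\omega(1)}$, i.e. $\frac{\log n_0^{(m)}}{\log\log n_1^{(m)}}\to\infty$ as $m\to\infty$. Writing $n_0=n_0^{(m)}$, $n_1=n_1^{(m)}$, let $k=\frac{\log n_1}{\log n_0}$ and let $x_0$ be the unique root of the equation $x-1-x^{\frac{k-1}{k}}=0$ in the interval $[1,\infty)$. Then $$ch(K_{n_0,n_1})=(1+o(1))\frac{\log n_1}{\log x_0},$$ i.e. $ch(K_{n_0,n_1})\big/\frac{\log n_1}{\log x_0}\to 1$ as $m\to\infty$.
   Context: All logarithms are to base 2. For a graph $G=(V,E)$, the choice number $ch(G)$ is the minimum integer $k$ such that for every assignment of a list $S(v)$ of at least $k$ colors to each vertex $v\in V$, there is a proper vertex coloring of $G$ assigning to each vertex $v$ a color from $S(v)$. $K_{n_0,n_1}$ denotes the complete bipartite graph with parts of sizes $n_0$ and $n_1$. *)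

theory Defs
  imports Complex_Main
begin

definition choosable :: "'v set \<Rightarrow> ('v \<Rightarrow> 'v \<Rightarrow> bool) \<Rightarrow> nat \<Rightarrow> bool" where
  "choosable V E k \<longleftrightarrow>
     (\<forall>S :: 'v \<Rightarrow> nat set. (\<forall>v\<in>V. finite (S v) \<and> k \<le> card (S v)) \<longrightarrow>
        (\<exists>c :: 'v \<Rightarrow> nat. (\<forall>v\<in>V. c v \<in> S v) \<and>
                         (\<forall>u\<in>V. \<forall>v\<in>V. E u v \<longrightarrow> c u \<noteq> c v)))"

definition choice_number :: "'v set \<Rightarrow> ('v \<Rightarrow> 'v \<Rightarrow> bool) \<Rightarrow> nat" where
  "choice_number V E = (LEAST k. choosable V E k)"

definition Kbip_V :: "nat \<Rightarrow> nat \<Rightarrow> (nat + nat) set" where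
  "Kbip_V n0 n1 = Inl ` {..<n0} \<union> Inr ` {..<n1}"

definition Kbip_E :: "(nat + nat) \<Rightarrow> (nat + nat) \<Rightarrow> bool" where
  "Kbip_E u v \<longleftrightarrow> (isl u \<noteq> isl v)"

definition ch_Kbip :: "nat \<Rightarrow> nat \<Rightarrow> nat" where
  "ch_Kbip n0 n1 = choice_number (Kbip_V n0 n1) Kbip_E"

definition root_x0 :: "real \<Rightarrow> real" where
  "root_x0 k = (THE x. 1 \<le> x \<and> x - 1 - x powr ((k - 1) / k) = 0)"

end

theory Submission
  imports Defs "HOL-Library.FuncSet"
begin


lemma root_ex1:
  fixes k :: real assumes k: "1 \<le> k"
  shows "\<exists>!x. 1 \<le> x \<and> x - 1 - x powr ((k - 1) / k) = 0"
proof -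
  define f where "f = (\<lambda>x::real. x - 1 - x powr ((k - 1) / k))"
  have c: "continuous_on {1..2 powr k} f" unfolding f_def
    by (intro continuous_intros) auto
  have "(2 powr k) powr ((k - 1) / k) = 2 powr (k - 1)"
    using k by (simp add: powr_powr)
  hence f2: "f (2 powr k) = 2 powr (k-1) - 1"
    unfolding f_def using k by (simp add: powr_diff)
  have "0 \<le> f (2 powr k)" unfolding f2 using k
    by (simp add: ge_one_powr_ge_zero)
  moreover have "f 1 \<le> 0" unfolding f_def by simp
  moreover have "1 \<le> (2::real) powr k" using k by (simp add: ge_one_powr_ge_zero)
  ultimately obtain x where x: "1 \<le> x" "f x = 0"
    using IVT'[of f 1 0 "2 powr k"] c by auto
  have uniq: "z = x" if z: "1 \<le> z" "f z = 0" for z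
  proof -
    have key: "w powr (-1/k) = 1 - 1/w \<and> 1 < w" if "1 \<le> w" "f w = 0" for w
    proof -
      have "w \<noteq> 1" using that unfolding f_def by auto
      hence w1: "1 < w" using that by simp
      have "w powr ((k-1)/k) = w powr 1 * w powr (-1/k)"
        by (subst powr_add[symmetric]) (use k in \<open>simp add: field_simps\<close>)
      hence "w - 1 = w * w powr (-1/k)" using that w1 unfolding f_def by simp
      thus ?thesis using w1 by (simp add: field_simps)
    qed
    have kz: "z powr (-1/k) = 1 - 1/z" "1 < z" using key z by auto
    have kx: "x powr (-1/k) = 1 - 1/x" "1 < x" using key x by auto
    have neg: "-1/k < 0" using k by simp
    show ?thesis
    proof (rule ccontr)
      assume "z \<noteq> x"
      hence "z < x \<or> x < z" by auto
      thus False
      proof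
        assume "z < x"
        hence "x powr (-1/k) < z powr (-1/k)" using powr_less_mono2_neg[OF neg, of z x] kz by linarith
        moreover have "1/x < 1/z" using \<open>z < x\<close> kz by (simp add: frac_less2)
        ultimately show False using kx kz by simp
      next
        assume "x < z"
        hence "z powr (-1/k) < x powr (-1/k)" using powr_less_mono2_neg[OF neg, of x z] kx by linarith
        moreover have "1/z < 1/x" using \<open>x < z\<close> kx by (simp add: frac_less2)
        ultimately show False using kx kz by simp
      qed
    qed
  qed
  show ?thesis using x uniq unfolding f_def by blast
qed

lemma root_props:
  fixes k :: real assumes k: "1 \<le> k"
  defines "x \<equiv> root_x0 k"
  shows "2 \<le> x" "x powr (-1/k) = 1 - 1/x" "log 2 x \<le> k" "x \<le> 3 * k"
proof -
  have r: "1 \<le> x" "x - 1 - x powr ((k - 1) / k) = 0"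
    using theI'[OF root_ex1[OF k]] unfolding x_def root_x0_def by auto
  have "1 \<le> x powr ((k - 1) / k)" using r k by (intro ge_one_powr_ge_zero) auto
  thus x2: "2 \<le> x" using r by simp
  have "x powr ((k-1)/k) = x powr 1 * x powr (-1/k)"
    by (subst powr_add[symmetric]) (use k in \<open>simp add: field_simps\<close>)
  hence "x - 1 = x * x powr (-1/k)" using r by simp
  thus e: "x powr (-1/k) = 1 - 1/x" using x2 by (simp add: field_simps)
  have e2: "x powr (1/k) = x / (x - 1)"
  proof -
    have "x powr (1/k) * x powr (-1/k) = 1" using x2 by (simp add: powr_add[symmetric])
    moreover have "x - 1 = x * x powr (-1/k)" using e x2 by (simp add: field_simps)
    ultimately have "x powr (1/k) * (x - 1) = x"
      by (metis mult.assoc mult.commute mult.left_neutral)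
    thus ?thesis using x2 by (simp add: field_simps)
  qed
  have "x / (x - 1) \<le> 2" using x2 by (simp add: field_simps)
  hence "log 2 (x powr (1/k)) \<le> log 2 2" using e2 x2 by simp
  hence "(1/k) * log 2 x \<le> 1" using x2 by (simp add: log_powr)
  thus "log 2 x \<le> k" using k by (simp add: field_simps)
  have "1 + 1/(x-1) = x / (x - 1)" using x2 by (simp add: field_simps)
  hence "ln (x powr (1/k)) = ln (1 + 1/(x-1))" using e2 by simp
  also have "\<dots> \<le> 1/(x-1)" by (rule ln_add_one_self_le_self) (use x2 in simp)
  finally have "ln x / k \<le> 1/(x-1)" using x2 by (simp add: ln_powr)
  hence A: "ln x * (x - 1) \<le> k" using x2 k by (simp add: field_simps)
  have "exp (1/2::real) \<le> 2"
  proof -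
    have "exp (1/2::real) ^ 2 = exp 1" by (simp add: exp_of_nat_mult[symmetric])
    also have "\<dots> \<le> 2 ^ 2" using exp_le by simp
    finally show ?thesis by (rule power2_le_imp_le) simp
  qed
  hence "1/2 \<le> ln (2::real)" by (subst ln_ge_iff) auto
  hence "1/2 \<le> ln x" using x2 by (smt (verit) ln_le_cancel_iff)
  hence "(1/2) * (x - 1) \<le> ln x * (x-1)" using x2 by (intro mult_right_mono) auto
  thus "x \<le> 3 * k" using A k by simp
qed



lemma wsum_total:
  fixes p :: real assumes "finite P"
  shows "(\<Sum>B\<in>Pow P. p ^ card B * (1-p) ^ card (P - B)) = 1"
  using prod_add[OF assms, of "\<lambda>_. p" "\<lambda>_. 1 - p"] by simp

lemma wsum_disj:
  fixes p :: real assumes "finite P" "T \<subseteq> P"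
  shows "(\<Sum>B\<in>Pow P. if T \<inter> B = {} then p ^ card B * (1-p) ^ card (P - B) else 0) = (1-p) ^ card T"
proof -
  have "(\<Prod>x\<in>P. (if x \<in> T then 0 else p) + (1 - p)) = (\<Prod>x\<in>P. if x \<in> T then 1 - p else 1)"
    by (rule prod.cong) auto
  also have "\<dots> = (1-p) ^ card T"
    using assms by (simp add: prod.If_cases Int_absorb1 Int_commute)
  finally have 1: "(\<Prod>x\<in>P. (if x \<in> T then 0 else p) + (1 - p)) = (1-p) ^ card T" .
  have 2: "(\<Prod>x\<in>X. if x \<in> T then 0 else p) = (if T \<inter> X = {} then p ^ card X else 0)"
    if "X \<in> Pow P" for X
  proof -
    have fX: "finite X" using that assms(1) finite_subset by auto
    show ?thesis
    proof (cases "T \<inter> X = {}")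
      case True
      hence "(\<Prod>x\<in>X. if x \<in> T then 0 else p) = (\<Prod>x\<in>X. p)"
        by (intro prod.cong) auto
      thus ?thesis using True by simp
    next
      case False
      then obtain x where "x \<in> T" "x \<in> X" by auto
      hence "(\<Prod>x\<in>X. if x \<in> T then 0 else p) = 0"
        using fX by (subst prod_zero_iff) (auto intro!: bexI[of _ x])
      thus ?thesis using False by simp
    qed
  qed
  show ?thesis
    using prod_add[OF assms(1), of "\<lambda>x. if x \<in> T then 0 else p" "\<lambda>_. 1 - p"] 1 2
    by (auto intro!: sum.cong)
qed

lemma wsum_sub:
  fixes p :: real assumes "finite P" "T \<subseteq> P"
  shows "(\<Sum>B\<in>Pow P. if T \<subseteq> B then p ^ card B * (1-p) ^ card (P - B) else 0) = p ^ card T"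
proof -
  have "(\<Prod>x\<in>P. p + (if x \<in> T then 0 else 1 - p)) = (\<Prod>x\<in>P. if x \<in> T then p else 1)"
    by (rule prod.cong) auto
  also have "\<dots> = p ^ card T"
    using assms by (simp add: prod.If_cases Int_absorb1 Int_commute)
  finally have 1: "(\<Prod>x\<in>P. p + (if x \<in> T then 0 else 1 - p)) = p ^ card T" .
  have 2: "(\<Prod>x\<in>P - X. if x \<in> T then 0 else 1 - p) = (if T \<subseteq> X then (1 - p) ^ card (P - X) else 0)"
    if "X \<in> Pow P" for X
  proof -
    have fX: "finite (P - X)" using assms(1) by auto
    show ?thesis
    proof (cases "T \<subseteq> X")
      case True
      hence "(\<Prod>x\<in>P - X. if x \<in> T then 0 else 1 - p) = (\<Prod>x\<in>P - X. 1 - p)"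
        by (intro prod.cong) auto
      thus ?thesis using True by simp
    next
      case False
      then obtain x where "x \<in> T" "x \<notin> X" by auto
      hence "x \<in> P - X" using assms by auto
      hence "(\<Prod>x\<in>P - X. if x \<in> T then 0 else 1 - p) = 0"
        using fX \<open>x \<in> T\<close> by (subst prod_zero_iff) (auto intro!: bexI[of _ x])
      thus ?thesis using False by simp
    qed
  qed
  show ?thesis
    using prod_add[OF assms(1), of "\<lambda>_. p" "\<lambda>x. if x \<in> T then 0 else 1 - p"] 1 2
    by (auto intro!: sum.cong)
qed

lemma choosable_UB:
  fixes p :: real assumes p: "0 < p" "p < 1"
    and H: "real n0 * (1-p)^s + real n1 * p^s < 1"
  shows "choosable (Kbip_V n0 n1) Kbip_E s"
  unfolding choosable_def
proof (intro allI impI)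
  fix S :: "nat + nat \<Rightarrow> nat set"
  assume HS: "\<forall>v\<in>Kbip_V n0 n1. finite (S v) \<and> s \<le> card (S v)"
  define P where "P = (\<Union>v\<in>Kbip_V n0 n1. S v)"
  have fP: "finite P" unfolding P_def Kbip_V_def using HS Kbip_V_def by auto
  define w where "w B = p ^ card B * (1-p) ^ card (P - B)" for B
  have w0: "0 \<le> w B" for B unfolding w_def using p by simp
  define bad where "bad B = (\<Sum>i<n0. if S (Inl i) \<inter> B = {} then 1 else 0) +
      (\<Sum>j<n1. if S (Inr j) \<subseteq> B then 1 else (0::real))" for B
  have SP0: "S (Inl i) \<subseteq> P" if "i < n0" for i using that unfolding P_def Kbip_V_def by auto
  have SP1: "S (Inr j) \<subseteq> P" if "j < n1" for j using that unfolding P_def Kbip_V_def by auto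
  have "(\<Sum>B\<in>Pow P. w B * bad B) =
     (\<Sum>i<n0. \<Sum>B\<in>Pow P. if S (Inl i) \<inter> B = {} then w B else 0) +
     (\<Sum>j<n1. \<Sum>B\<in>Pow P. if S (Inr j) \<subseteq> B then w B else 0)"
  proof -
    have "(\<Sum>B\<in>Pow P. w B * bad B) = (\<Sum>B\<in>Pow P. (\<Sum>i<n0. if S (Inl i) \<inter> B = {} then w B else 0)
       + (\<Sum>j<n1. if S (Inr j) \<subseteq> B then w B else 0))"
      unfolding bad_def by (intro sum.cong refl) (auto simp: distrib_left sum_distrib_left intro!: sum.cong arg_cong2[where f="(+)"])
    also have "\<dots> = (\<Sum>B\<in>Pow P. \<Sum>i<n0. if S (Inl i) \<inter> B = {} then w B else 0)
       + (\<Sum>B\<in>Pow P. \<Sum>j<n1. if S (Inr j) \<subseteq> B then w B else 0)"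
      by (rule sum.distrib)
    also have "\<dots> = (\<Sum>i<n0. \<Sum>B\<in>Pow P. if S (Inl i) \<inter> B = {} then w B else 0) +
     (\<Sum>j<n1. \<Sum>B\<in>Pow P. if S (Inr j) \<subseteq> B then w B else 0)"
      by (rule arg_cong2[where f="(+)"]; rule sum.swap)
    finally show ?thesis .
  qed
  also have "\<dots> = (\<Sum>i<n0. (1-p) ^ card (S (Inl i))) + (\<Sum>j<n1. p ^ card (S (Inr j)))"
    unfolding w_def using wsum_disj[OF fP SP0] wsum_sub[OF fP SP1] by simp
  also have "\<dots> \<le> (\<Sum>i<n0. (1-p) ^ s) + (\<Sum>j<n1. p ^ s)"
    using HS p unfolding Kbip_V_def
    by (intro add_mono sum_mono power_decreasing) auto
  also have "\<dots> < 1" using H by simp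
  also have "\<dots> = (\<Sum>B\<in>Pow P. w B)" unfolding w_def using wsum_total[OF fP] by simp
  finally have lt: "(\<Sum>B\<in>Pow P. w B * bad B) < (\<Sum>B\<in>Pow P. w B)" .
  have "\<exists>B\<in>Pow P. w B * bad B < w B"
  proof (rule ccontr)
    assume "\<not> ?thesis"
    hence "\<forall>B\<in>Pow P. w B \<le> w B * bad B" by (simp add: not_less)
    hence "(\<Sum>B\<in>Pow P. w B) \<le> (\<Sum>B\<in>Pow P. w B * bad B)" by (intro sum_mono) blast
    thus False using lt by simp
  qed
  then obtain B where B: "B \<in> Pow P" "w B * bad B < w B" by blast
  have badB: "bad B < 1"
  proof (rule ccontr)
    assume "\<not> bad B < 1"
    hence "w B * 1 \<le> w B * bad B" using w0[of B] by (intro mult_left_mono) auto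
    thus False using B(2) by simp
  qed
  have nn: "0 \<le> (\<Sum>j<n1. if S (Inr j) \<subseteq> B then 1 else (0::real))"
    "0 \<le> (\<Sum>i<n0. if S (Inl i) \<inter> B = {} then 1 else (0::real))"
    by (auto intro: sum_nonneg)
  have c0: "S (Inl i) \<inter> B \<noteq> {}" if "i < n0" for i
  proof
    assume a: "S (Inl i) \<inter> B = {}"
    have "(if S (Inl i) \<inter> B = {} then 1 else (0::real)) \<le> (\<Sum>i<n0. if S (Inl i) \<inter> B = {} then 1 else 0)"
      by (rule member_le_sum) (use that in auto)
    thus False using a badB nn unfolding bad_def by simp
  qed
  have c1: "\<not> S (Inr j) \<subseteq> B" if "j < n1" for j
  proof
    assume a: "S (Inr j) \<subseteq> B"
    have "(if S (Inr j) \<subseteq> B then 1 else (0::real)) \<le> (\<Sum>j<n1. if S (Inr j) \<subseteq> B then 1 else 0)"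
      by (rule member_le_sum) (use that in auto)
    thus False using a badB nn unfolding bad_def by simp
  qed
  define c where "c v = (if isl v then (SOME x. x \<in> S v \<inter> B) else (SOME x. x \<in> S v - B))" for v
  have cL: "c (Inl i) \<in> S (Inl i) \<inter> B" if "i < n0" for i
    using c0[OF that] unfolding c_def by simp (metis (mono_tags, lifting) IntE all_not_in_conv someI)
  have cR: "c (Inr j) \<in> S (Inr j) - B" if "j < n1" for j
    using c1[OF that] unfolding c_def by simp (metis (mono_tags, lifting) subsetI someI)
  show "\<exists>c. (\<forall>v\<in>Kbip_V n0 n1. c v \<in> S v) \<and>
      (\<forall>u\<in>Kbip_V n0 n1. \<forall>v\<in>Kbip_V n0 n1. Kbip_E u v \<longrightarrow> c u \<noteq> c v)"
  proof (intro exI[of _ c] conjI ballI impI)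
    fix v assume "v \<in> Kbip_V n0 n1"
    thus "c v \<in> S v" using cL cR unfolding Kbip_V_def by auto
  next
    fix u v assume "u \<in> Kbip_V n0 n1" "v \<in> Kbip_V n0 n1" "Kbip_E u v"
    thus "c u \<noteq> c v" using cL cR unfolding Kbip_V_def Kbip_E_def by (auto; metis DiffD2 IntD2)
  qed
qed



lemma pow_exp_bound:
  fixes M u n :: nat assumes "0 < M" "u \<le> M"
  shows "real ((M - u) ^ n) \<le> real M ^ n * exp (- (real n * real u / real M))"
proof -
  have "real (M - u) = real M * (1 - real u / real M)" using assms by (simp add: field_simps of_nat_diff)
  hence "real ((M - u) ^ n) = real M ^ n * (1 - real u / real M) ^ n" by (simp add: power_mult_distrib)
  also have "(1 - real u / real M) ^ n \<le> exp (- (real u / real M)) ^ n"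
  proof (rule power_mono)
    show "1 - real u / real M \<le> exp (- (real u / real M))"
      using exp_ge_add_one_self[of "- (real u / real M)"] by simp
    show "0 \<le> 1 - real u / real M" using assms by (simp add: field_simps)
  qed
  also have "exp (- (real u / real M)) ^ n = exp (- (real n * real u / real M))"
    by (simp add: exp_of_nat_mult[symmetric])
  finally show ?thesis by (simp add: mult_left_mono)
qed

lemma two_pow_exp: "(2::real) ^ N \<le> exp (real N)"
proof -
  have "(2::real) \<le> exp 1" using exp_ge_add_one_self[of 1] by simp
  hence "(2::real) ^ N \<le> exp 1 ^ N" by (rule power_mono) simp
  thus ?thesis by (simp add: exp_of_nat_mult[symmetric])
qed

lemma key_factor:
  fixes M u n N :: nat assumes "0 < M" "u \<le> M" "1 \<le> N"
    and "2 * real N \<le> real n * real u / real M"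
  shows "real ((M - u) ^ n) * 2 ^ N < real M ^ n"
proof -
  have "real ((M - u) ^ n) \<le> real M ^ n * exp (- (2 * real N))"
    using pow_exp_bound[OF assms(1,2), of n] assms(4) assms(1)
    by (smt (verit) exp_le_cancel_iff mult_left_mono zero_le_power of_nat_0_le_iff)
  hence "real ((M - u) ^ n) * 2 ^ N \<le> real M ^ n * exp (- (2 * real N)) * exp (real N)"
    using two_pow_exp[of N] by (intro mult_mono) auto
  also have "\<dots> = real M ^ n * exp (- real N)"
    by (simp add: mult.assoc exp_add[symmetric])
  also have "\<dots> < real M ^ n" using assms by simp
  finally show ?thesis .
qed

lemma choosable_LB:
  fixes n0 n1 N s :: nat
  assumes s1: "1 \<le> s" "s \<le> N"
    and H: "\<forall>a\<le>N. 2 * real N \<le> real n0 * real ((N - a) choose s) / real (N choose s) \<or>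
                   2 * real N \<le> real n1 * real (a choose s) / real (N choose s)"
  shows "\<not> choosable (Kbip_V n0 n1) Kbip_E s"
proof
  assume ch: "choosable (Kbip_V n0 n1) Kbip_E s"
  define Ss where "Ss = {X. X \<subseteq> {..<N} \<and> card X = s}"
  define M where "M = N choose s"
  have cSs: "card Ss = M" unfolding Ss_def M_def using n_subsets[of "{..<N}" s] by simp
  have M0: "0 < M" unfolding M_def using s1 by simp
  have fSs: "finite Ss" unfolding Ss_def by (rule finite_subset[of _ "Pow {..<N}"]) auto
  define F where "F = (PiE {..<n0} (\<lambda>_. Ss)) \<times> (PiE {..<n1} (\<lambda>_. Ss))"
  define Bad where "Bad A = PiE {..<n0} (\<lambda>_. {X\<in>Ss. X \<inter> A \<noteq> {}}) \<times> PiE {..<n1} (\<lambda>_. {X\<in>Ss. \<not> X \<subseteq> A})" for A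
  have cF: "card F = M ^ n0 * M ^ n1" unfolding F_def
    by (simp add: card_cartesian_product card_PiE cSs)
  have fF: "finite F" unfolding F_def using fSs by (simp add: finite_PiE)
  have fBad: "finite (Bad A)" for A unfolding Bad_def using fSs by (simp add: finite_PiE)
  have bound: "real (card (Bad A)) * 2 ^ N < real (card F)" if A: "A \<subseteq> {..<N}" for A
  proof -
    define a where "a = card A"
    have fA: "finite A" using A finite_subset by auto
    have aN: "a \<le> N" unfolding a_def using card_mono[OF _ A] by simp
    have e1: "{X\<in>Ss. X \<inter> A = {}} = {X. X \<subseteq> {..<N} - A \<and> card X = s}" unfolding Ss_def by auto
    have "card ({..<N} - A) = N - a" unfolding a_def using A fA by (simp add: card_Diff_subset)
    hence cu: "card {X\<in>Ss. X \<inter> A = {}} = (N - a) choose s" unfolding e1 by (simp add: n_subsets)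
    have e2: "{X\<in>Ss. X \<subseteq> A} = {X. X \<subseteq> A \<and> card X = s}" unfolding Ss_def using A by auto
    have cv: "card {X\<in>Ss. X \<subseteq> A} = a choose s" unfolding e2 a_def using fA by (simp add: n_subsets)
    have d1: "{X\<in>Ss. X \<inter> A \<noteq> {}} = Ss - {X\<in>Ss. X \<inter> A = {}}" by auto
    have d2: "{X\<in>Ss. \<not> X \<subseteq> A} = Ss - {X\<in>Ss. X \<subseteq> A}" by auto
    have c1: "card {X\<in>Ss. X \<inter> A \<noteq> {}} = M - ((N - a) choose s)"
      unfolding d1 using fSs cSs cu by (subst card_Diff_subset) auto
    have c2: "card {X\<in>Ss. \<not> X \<subseteq> A} = M - (a choose s)"
      unfolding d2 using fSs cSs cv by (subst card_Diff_subset) auto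
    have cB: "card (Bad A) = (M - ((N - a) choose s)) ^ n0 * (M - (a choose s)) ^ n1"
      unfolding Bad_def by (simp add: card_cartesian_product card_PiE c1 c2)
    have le1: "(N - a) choose s \<le> M" "a choose s \<le> M" unfolding M_def using aN
      by (auto intro: binomial_right_mono)
    have N1: "1 \<le> N" using s1 by simp
    have t0: "real ((M - ((N - a) choose s)) ^ n0) \<le> real M ^ n0"
      "real ((M - (a choose s)) ^ n1) \<le> real M ^ n1" by (simp_all add: power_mono)
    from H aN have "2 * real N \<le> real n0 * real ((N - a) choose s) / real M \<or>
                   2 * real N \<le> real n1 * real (a choose s) / real M" unfolding M_def by blast
    thus ?thesis
    proof
      assume h: "2 * real N \<le> real n0 * real ((N - a) choose s) / real M"
      have k: "real ((M - ((N - a) choose s)) ^ n0) * 2 ^ N < real M ^ n0"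
        by (rule key_factor[OF M0 le1(1) N1 h])
      have "real (card (Bad A)) * 2 ^ N = (real ((M - ((N - a) choose s)) ^ n0) * 2 ^ N) * real ((M - (a choose s)) ^ n1)"
        unfolding cB by simp
      also have "\<dots> \<le> (real ((M - ((N - a) choose s)) ^ n0) * 2 ^ N) * real M ^ n1"
        using t0 by (intro mult_left_mono) auto
      also have "\<dots> < real M ^ n0 * real M ^ n1" using k M0 by (intro mult_strict_right_mono) auto
      finally show ?thesis using cF by simp
    next
      assume h: "2 * real N \<le> real n1 * real (a choose s) / real M"
      have k: "real ((M - (a choose s)) ^ n1) * 2 ^ N < real M ^ n1"
        by (rule key_factor[OF M0 le1(2) N1 h])
      have "real (card (Bad A)) * 2 ^ N = real ((M - ((N - a) choose s)) ^ n0) * (real ((M - (a choose s)) ^ n1) * 2 ^ N)"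
        unfolding cB by simp
      also have "\<dots> \<le> real M ^ n0 * (real ((M - (a choose s)) ^ n1) * 2 ^ N)"
        using t0 by (intro mult_right_mono) auto
      also have "\<dots> < real M ^ n0 * real M ^ n1" using k M0 by (intro mult_strict_left_mono) auto
      finally show ?thesis using cF by simp
    qed
  qed
  have "real (card (\<Union>A\<in>Pow {..<N}. Bad A)) \<le> real (\<Sum>A\<in>Pow {..<N}. card (Bad A))"
    by (simp only: of_nat_le_iff) (rule card_UN_le, simp)
  also have "\<dots> = (\<Sum>A\<in>Pow {..<N}. real (card (Bad A)) * 2 ^ N) / 2 ^ N"
    by (simp add: sum_distrib_right[symmetric])
  also have "\<dots> < (\<Sum>A\<in>Pow {..<N}. real (card F)) / 2 ^ N"
    using bound by (intro divide_strict_right_mono sum_strict_mono) auto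
  also have "\<dots> = real (card F)" by (simp add: card_Pow)
  finally have "card (\<Union>A\<in>Pow {..<N}. Bad A) < card F" by simp
  hence "\<not> F \<subseteq> (\<Union>A\<in>Pow {..<N}. Bad A)"
    using card_mono[of "\<Union>A\<in>Pow {..<N}. Bad A" F] fBad by auto
  then obtain fp where fp: "fp \<in> F" "fp \<notin> (\<Union>A\<in>Pow {..<N}. Bad A)" by blast
  obtain f0 f1 where fpe: "fp = (f0, f1)" by (cases fp)
  have f: "(f0, f1) \<in> F" "\<And>A. A \<subseteq> {..<N} \<Longrightarrow> (f0, f1) \<notin> Bad A" using fp fpe by auto
  have f0: "\<And>i. i < n0 \<Longrightarrow> f0 i \<in> Ss" and f1: "\<And>j. j < n1 \<Longrightarrow> f1 j \<in> Ss"
    using f(1) unfolding F_def by auto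
  define S where "S v = (case v of Inl i \<Rightarrow> f0 i | Inr j \<Rightarrow> f1 j)" for v
  have "\<forall>v\<in>Kbip_V n0 n1. finite (S v) \<and> s \<le> card (S v)"
    using f0 f1 unfolding Kbip_V_def S_def Ss_def by (auto; metis finite_lessThan finite_subset)
  then obtain c where c: "\<forall>v\<in>Kbip_V n0 n1. c v \<in> S v"
     "\<forall>u\<in>Kbip_V n0 n1. \<forall>v\<in>Kbip_V n0 n1. Kbip_E u v \<longrightarrow> c u \<noteq> c v"
    using ch unfolding choosable_def by blast
  define A where "A = c ` Inl ` {..<n0}"
  have cl: "c (Inl i) \<in> f0 i" if "i < n0" for i
    using c(1) that bspec[OF c(1), of "Inl i"] unfolding Kbip_V_def S_def by auto
  have cr: "c (Inr j) \<in> f1 j" if "j < n1" for j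
    using bspec[OF c(1), of "Inr j"] that unfolding Kbip_V_def S_def by auto
  have AN: "A \<subseteq> {..<N}" unfolding A_def using cl f0 unfolding Ss_def by auto
  have "(f0, f1) \<in> Bad A"
    unfolding Bad_def
  proof (rule SigmaI)
    show "f0 \<in> PiE {..<n0} (\<lambda>_. {X\<in>Ss. X \<inter> A \<noteq> {}})"
      using f(1) f0 cl unfolding F_def A_def by (auto simp: PiE_iff; blast)
    have "c (Inr j) \<notin> A" if "j < n1" for j
    proof
      assume "c (Inr j) \<in> A"
      then obtain i where "i < n0" "c (Inr j) = c (Inl i)" unfolding A_def by auto
      moreover have "Kbip_E (Inl i) (Inr j)" unfolding Kbip_E_def by simp
      ultimately show False using c(2) that unfolding Kbip_V_def by fastforce
    qed
    thus "f1 \<in> PiE {..<n1} (\<lambda>_. {X\<in>Ss. \<not> X \<subseteq> A})"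
      using f(1) f1 cr unfolding F_def by (auto simp: PiE_iff; blast)
  qed
  thus False using f(2)[OF AN] by simp
qed



lemma binom_ratio:
  fixes a s N :: nat assumes "s \<le> a" "a \<le> N" "0 < N"
  shows "((real a - real s) / real N) ^ s * real (N choose s) \<le> real (a choose s)"
proof -
  have sN: "s \<le> N" using assms by simp
  have "((real a - real s) / real N) ^ s * real (N choose s)
      = (\<Prod>i = 0..<s. (real a - real s) / real N * (real (N - i) / real (s - i)))"
    by (simp only: binomial_altdef_of_nat[OF sN] prod.distrib prod_constant card_atLeastLessThan diff_zero)
  also have "\<dots> \<le> (\<Prod>i = 0..<s. real (a - i) / real (s - i))"
  proof (rule prod_mono, rule conjI)
    fix i assume i: "i \<in> {0..<s}"
    hence i': "i < s" by simp
    show "0 \<le> (real a - real s) / real N * (real (N - i) / real (s - i))"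
      using assms by auto
    have "(real a - real s) * real (N - i) \<le> (real a - real s) * real N"
      using assms by (intro mult_left_mono) auto
    also have "\<dots> \<le> real (a - i) * real N" using assms i' by (intro mult_right_mono) (auto simp: of_nat_diff)
    finally have "(real a - real s) / real N * real (N - i) \<le> real (a - i)"
      using assms by (simp add: field_simps)
    thus "(real a - real s) / real N * (real (N - i) / real (s - i)) \<le> real (a - i) / real (s - i)"
      using i' divide_right_mono[of "(real a - real s) / real N * real (N - i)" "real (a - i)" "real (s - i)"]
      by (simp del: of_nat_diff)
  qed
  also have "\<dots> = real (a choose s)" using binomial_altdef_of_nat[OF assms(1), where 'a=real] by simp
  finally show ?thesis .
qed

lemma choosable_mono: "choosable V E k \<Longrightarrow> k \<le> k' \<Longrightarrow> choosable V E k'"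
proof -
  assume h: "choosable V E k" and kk: "k \<le> k'"
  show ?thesis unfolding choosable_def
  proof (intro allI impI)
    fix S :: "'a \<Rightarrow> nat set" assume "\<forall>v\<in>V. finite (S v) \<and> k' \<le> card (S v)"
    hence "\<forall>v\<in>V. finite (S v) \<and> k \<le> card (S v)" using kk by auto
    thus "\<exists>c. (\<forall>v\<in>V. c v \<in> S v) \<and> (\<forall>u\<in>V. \<forall>v\<in>V. E u v \<longrightarrow> c u \<noteq> c v)"
      using h unfolding choosable_def by blast
  qed
qed



lemma pow2: fixes x :: real assumes "0 < x" shows "x ^ n = 2 powr (log 2 x * real n)"
proof -
  have "x ^ n = x powr real n" using assms by (simp add: powr_realpow)
  also have "\<dots> = (2 powr log 2 x) powr real n" using assms by simp
  also have "\<dots> = 2 powr (log 2 x * real n)" by (simp add: powr_powr)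
  finally show ?thesis .
qed

lemma basic_m:
  fixes n0 n1 :: nat
  assumes "2 \<le> n0" "n0 \<le> n1"
  defines "L \<equiv> log 2 (real n1)" and "l \<equiv> log 2 (real n0)"
  defines "x \<equiv> root_x0 (L / l)"
  shows "1 \<le> l" "l \<le> L" "1 \<le> L / l" "2 \<le> x" "1 \<le> log 2 x" "log 2 x \<le> L / l" "x \<le> 3 * (L / l)"
    "log 2 (1 - 1/x) = - log 2 x / (L / l)" "real n0 = 2 powr l" "real n1 = 2 powr L"
    "log 2 (1/x) = - log 2 x"
proof -
  show l1: "1 \<le> l" unfolding l_def using assms(1) by simp
  show lL: "l \<le> L" unfolding l_def L_def using assms by simp
  show k1: "1 \<le> L / l" using l1 lL by simp
  note rp = root_props[OF k1]
  show x2: "2 \<le> x" using rp unfolding x_def by simp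
  show "1 \<le> log 2 x" using x2 by simp
  show "log 2 x \<le> L / l" "x \<le> 3 * (L / l)" using rp unfolding x_def by auto
  have "1 - 1/x = x powr (-1 / (L/l))" using rp unfolding x_def by simp
  thus "log 2 (1 - 1/x) = - log 2 x / (L / l)" using x2 by (simp add: log_powr)
  show "real n0 = 2 powr l" "real n1 = 2 powr L" unfolding l_def L_def using assms by simp_all
  show "log 2 (1/x) = - log 2 x" using x2 by (simp add: log_divide)
qed

lemma upper_m:
  fixes n0 n1 :: nat and e :: real
  assumes "2 \<le> n0" "n0 \<le> n1" "0 < e" "4 \<le> e * log 2 (real n0)"
  defines "L \<equiv> log 2 (real n1)" and "l \<equiv> log 2 (real n0)"
  defines "y \<equiv> log 2 (root_x0 (L / l))"
  shows "choosable (Kbip_V n0 n1) Kbip_E (nat \<lceil>(1 + e) * L / y\<rceil>)"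
proof -
  note b = basic_m[OF assms(1,2), folded L_def l_def, folded y_def]
  define x where "x = root_x0 (L / l)"
  note b = b[folded x_def]
  have y_def': "y = log 2 x" unfolding y_def x_def ..
  define s where "s = nat \<lceil>(1 + e) * L / y\<rceil>"
  have y1: "1 \<le> y" using b y_def' by simp
  have sge: "(1 + e) * L / y \<le> real s" unfolding s_def by linarith
  hence ys: "(1 + e) * L \<le> y * real s" using y1 by (simp add: field_simps)
  have x2: "2 \<le> x" using b by simp
  define p where "p = 1 / x"
  have p: "0 < p" "p < 1" unfolding p_def using x2 by auto
  have t1: "real n1 * p ^ s \<le> 1/16"
  proof -
    have "real n1 * p ^ s = 2 powr L * 2 powr (- y * real s)"
      unfolding p_def using b x2 y_def' by (simp add: pow2)
    also have "\<dots> = 2 powr (L - y * real s)" by (simp add: powr_add[symmetric])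
    also have "\<dots> \<le> 2 powr (-4)"
    proof (rule powr_mono)
      have "4 \<le> e * L" using assms(4) b(2) assms(3) unfolding l_def
        by (smt (verit) mult_left_mono)
      thus "L - y * real s \<le> -4" using ys by (simp add: algebra_simps)
    qed simp
    finally show ?thesis by (simp add: powr_minus)
  qed
  have t0: "real n0 * (1 - p) ^ s \<le> 1/16"
  proof -
    have lp: "0 < L / l" using b by linarith
    have "real n0 * (1 - p) ^ s = 2 powr l * 2 powr (- y / (L / l) * real s)"
      unfolding p_def using b x2 y_def' by (simp add: pow2)
    also have "\<dots> = 2 powr (l - y * real s / (L / l))" by (simp add: powr_add[symmetric] algebra_simps)
    also have "\<dots> \<le> 2 powr (-4)"
    proof (rule powr_mono)
      have "(1 + e) * L / (L / l) \<le> y * real s / (L / l)"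
        using ys lp by (intro divide_right_mono) auto
      moreover have "(1 + e) * L / (L / l) = (1 + e) * l" using lp b by (auto simp: field_simps)
      ultimately show "l - y * real s / (L / l) \<le> -4" using assms(4) unfolding l_def by (simp add: algebra_simps)
    qed simp
    finally show ?thesis by (simp add: powr_minus)
  qed
  have "real n0 * (1 - p) ^ s + real n1 * p ^ s < 1" using t0 t1 by simp
  thus ?thesis using choosable_UB[OF p] unfolding s_def by blast
qed

lemma ratio_bound:
  fixes r q :: real and N s b n :: nat
  assumes "0 < real (N choose s)" "r ^ s * real (N choose s) \<le> real (b choose s)"
    "2 * real N \<le> real n * q ^ s" "0 \<le> q" "q \<le> r"
  shows "2 * real N \<le> real n * real (b choose s) / real (N choose s)"
proof -
  have "q ^ s \<le> r ^ s" using assms by (intro power_mono) auto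
  also have "\<dots> \<le> real (b choose s) / real (N choose s)" using assms by (simp add: field_simps)
  finally have "real n * q ^ s \<le> real n * (real (b choose s) / real (N choose s))"
    by (intro mult_left_mono) auto
  thus ?thesis using assms(3) by simp
qed

lemma lower_m:
  fixes n0 n1 :: nat and e :: real
  assumes "2 \<le> n0" "n0 \<le> n1" "0 < e" "e \<le> 1/2"
    and hL: "14 / (1 - 2 powr (-e/2)) \<le> log 2 (real n1)"
    and hl: "6 * log 2 (log 2 (real n1)) \<le> e * log 2 (real n0)"
  defines "L \<equiv> log 2 (real n1)" and "l \<equiv> log 2 (real n0)"
  defines "y \<equiv> log 2 (root_x0 (L / l))"
  shows "\<not> choosable (Kbip_V n0 n1) Kbip_E (nat \<lfloor>(1 - e) * L / y\<rfloor>)"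
proof -
  note b = basic_m[OF assms(1,2), folded L_def l_def, folded y_def]
  define x where "x = root_x0 (L / l)"
  note b = b[folded x_def]
  have y_def': "y = log 2 x" unfolding y_def x_def ..
  define d where "d = 1 - 2 powr (-e/2)"
  have "2 powr (-e/2) < 2 powr 0" using assms(3) by (intro powr_less_mono) auto
  hence d: "0 < d" "d \<le> 1" unfolding d_def by auto
  have L14: "14 / d \<le> L" using hL unfolding d_def L_def .
  have "14 \<le> 14 / d" using d by (simp add: field_simps)
  hence L14': "14 \<le> L" using L14 by simp
  have "log 2 8 \<le> log 2 L" using L14' by simp
  moreover have "log 2 (8::real) = 3"
  proof -
    have "(2::real) powr 3 = 8" by (simp add: powr_numeral)
    thus ?thesis using log_powr_cancel[of 2 3] by simp
  qed
  ultimately have lL3: "3 \<le> log 2 L" by simp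
  have el: "6 * log 2 L \<le> e * l" using hl unfolding L_def l_def .
  have x2: "2 \<le> x" using b by simp
  have y1: "1 \<le> y" using b y_def' by simp
  have yL: "y \<le> L / l" using b y_def' by simp
  have l1: "1 \<le> l" using b by simp
  have lpos: "0 < L / l" using b by linarith
  define s where "s = nat \<lfloor>(1 - e) * L / y\<rfloor>"
  have sle: "real s \<le> (1 - e) * L / y" unfolding s_def using assms(3,4) y1 b by simp
  have ys: "y * real s \<le> (1 - e) * L" using sle y1 by (simp add: field_simps)
  have sL: "real s \<le> L"
  proof -
    have "(1 - e) * L / y \<le> L / y" using assms(3) b by (intro divide_right_mono) (auto simp: algebra_simps)
    also have "\<dots> \<le> L" using y1 b by (simp add: field_simps)
    finally show ?thesis using sle by simp
  qed
  have "l \<le> L / y" using yL y1 l1 by (simp add: field_simps)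
  hence A1: "(1 - e) * l \<le> (1 - e) * (L / y)" using assms(4) by (intro mult_left_mono) auto
  have A2: "18 \<le> e * l" using el lL3 by linarith
  have A3: "e * l \<le> 1/2 * l" using assms(4) l1 by (intro mult_right_mono) auto
  have A4: "1/2 * l \<le> (1 - e) * l" using assms(4) l1 by (intro mult_right_mono) auto
  have A5: "(1 - e) * l = l - e * l" by (simp add: algebra_simps)
  have "1 \<le> (1 - e) * L / y" using A1 A2 A3 A5 by simp
  hence s1: "1 \<le> s" unfolding s_def by linarith
  define T where "T = nat \<lceil>2 * x / d\<rceil>"
  have Tge: "2 * x / d \<le> real T" unfolding T_def by linarith
  have r0: "0 \<le> 2 * x / d" using x2 d by simp
  hence "real T = real_of_int \<lceil>2 * x / d\<rceil>" unfolding T_def by simp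
  hence Tle: "real T \<le> 2 * x / d + 1" using ceiling_correct[of "2 * x / d"] by linarith
  have "0 < 2 * x / d" using x2 d by simp
  hence "0 < real T" using Tge by linarith
  hence T1: "1 \<le> T" by simp
  define N where "N = s * T"
  have sN: "s \<le> N" unfolding N_def using T1 by simp
  have N0: "0 < N" using s1 sN by simp
  have CN: "0 < real (N choose s)" using sN by simp
  have N2: "2 * real N \<le> 2 powr (e * l / 2)"
  proof -
    have "L / l \<le> L / 1" using l1 L14' by (intro divide_left_mono) auto
    hence "x \<le> 3 * L" using b by linarith
    hence C1: "2 * x / d \<le> 6 * L / d" using d by (intro divide_right_mono) auto
    have "1 \<le> L / d" using d L14' by (simp add: field_simps)
    hence "2 * x / d + 1 \<le> 6 * L / d + L / d" using C1 by simp
    hence Tb: "real T \<le> 7 * L / d" using Tle by simp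
    have "2 * real N = 2 * real s * real T" unfolding N_def by simp
    also have "\<dots> \<le> 2 * L * (7 * L / d)" using sL Tb by (intro mult_mono) auto
    also have "\<dots> = (14 / d) * L * L" by simp
    also have "\<dots> \<le> L * L * L" using L14 L14' by (intro mult_right_mono) auto
    also have "\<dots> = 2 powr (3 * log 2 L)"
    proof -
      have "L ^ 3 = 2 powr (log 2 L * real 3)" using L14' by (intro pow2) simp
      thus ?thesis by (simp add: power3_eq_cube mult.commute)
    qed
    also have "\<dots> \<le> 2 powr (e * l / 2)" using el by (intro powr_mono) auto
    finally show ?thesis .
  qed
  define p where "p = 1 / x"
  have p: "0 < p" "p < 1" unfolding p_def using x2 by auto
  have H: "\<forall>a\<le>N. 2 * real N \<le> real n0 * real ((N - a) choose s) / real (N choose s) \<or>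
                   2 * real N \<le> real n1 * real (a choose s) / real (N choose s)"
  proof (intro allI impI)
    fix a assume aN: "a \<le> N"
    show "2 * real N \<le> real n0 * real ((N - a) choose s) / real (N choose s) \<or>
          2 * real N \<le> real n1 * real (a choose s) / real (N choose s)"
    proof (cases "real N * p * (1 - d) + real s \<le> real a")
      case True
      have q0: "0 \<le> p * (1 - d)" using p d by simp
      have qr: "p * (1 - d) \<le> (real a - real s) / real N" using True N0 by (simp add: field_simps)
      have "0 \<le> real N * (p * (1 - d))" using q0 by simp
      hence "real s \<le> real a" using True by (simp add: mult.assoc)
      hence sa: "s \<le> a" by simp
      have br: "((real a - real s) / real N) ^ s * real (N choose s) \<le> real (a choose s)"
        using binom_ratio[OF sa aN N0] .
      have "2 * real N \<le> real n1 * (p * (1 - d)) ^ s"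
      proof -
        have "1 - d = 2 powr (-e/2)" unfolding d_def by simp
        hence "log 2 (1 - d) = -e/2" by simp
        hence D1: "(1 - d) ^ s = 2 powr (-e/2 * real s)" using d pow2[of "1 - d" s]
          by (simp add: d_def)
        have D2: "p ^ s = 2 powr (- y * real s)" using pow2[of p s] p b y_def' unfolding p_def by simp
        have "real n1 * (p * (1 - d)) ^ s = 2 powr L * (2 powr (- y * real s) * 2 powr (-e/2 * real s))"
          using b D1 D2 by (simp add: power_mult_distrib)
        also have "\<dots> = 2 powr (L - y * real s - e/2 * real s)" by (simp add: powr_add[symmetric] algebra_simps)
        also have "\<dots> \<ge> 2 powr (e * l / 2)"
        proof (rule powr_mono)
          have "e * l \<le> e * L" using b assms(3) by simp
          moreover have "e/2 * real s \<le> e/2 * L" using sL assms(3) by simp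
          ultimately show "e * l / 2 \<le> L - y * real s - e / 2 * real s" using ys by (simp add: algebra_simps)
        qed simp
        finally show ?thesis using N2 by simp
      qed
      hence "2 * real N \<le> real n1 * real (a choose s) / real (N choose s)"
        using ratio_bound[OF CN br _ q0 qr] by blast
      thus ?thesis by blast
    next
      case False
      define bb where "bb = N - a"
      have rb: "real bb = real N - real a" unfolding bb_def using aN by simp
      have "real N * p * d = real s * (real T * p * d)" unfolding N_def by simp
      moreover have "2 \<le> real T * p * d"
      proof -
        have "2 * x / d * p * d \<le> real T * p * d" using Tge p d by (intro mult_right_mono) auto
        moreover have "2 * x / d * p * d = 2" unfolding p_def using d x2 by simp
        ultimately show ?thesis by simp
      qed
      moreover have "real s * 2 \<le> real s * (real T * p * d)"
        using \<open>2 \<le> real T * p * d\<close> by (intro mult_left_mono) auto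
      ultimately have B1: "2 * real s \<le> real N * p * d" by (simp only: mult.commute)
      have B2: "real N * p * (1 - d) = real N * p - real N * p * d" by (simp add: algebra_simps)
      have B3: "real N * (1 - p) = real N - real N * p" by (simp add: algebra_simps)
      have "real N * (1 - p) \<le> real bb - real s" using False B1 B2 B3 rb by linarith
      hence qr: "1 - p \<le> (real bb - real s) / real N" using N0 by (simp add: pos_le_divide_eq mult.commute)
      have q0: "0 \<le> 1 - p" using p by simp
      have "0 \<le> (real bb - real s) / real N" using qr q0 by linarith
      hence "0 \<le> real bb - real s" using N0 by (simp add: zero_le_divide_iff)
      hence sb: "s \<le> bb" by simp
      have bN: "bb \<le> N" unfolding bb_def by simp
      have br: "((real bb - real s) / real N) ^ s * real (N choose s) \<le> real (bb choose s)"
        using binom_ratio[OF sb bN N0] .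
      have "2 * real N \<le> real n0 * (1 - p) ^ s"
      proof -
        have "real n0 * (1 - p) ^ s = 2 powr l * 2 powr (- y / (L / l) * real s)"
          unfolding p_def using b x2 y_def' by (simp add: pow2)
        also have "\<dots> = 2 powr (l - y * real s / (L / l))" by (simp add: powr_add[symmetric] algebra_simps)
        also have "\<dots> \<ge> 2 powr (e * l / 2)"
        proof (rule powr_mono)
          have "y * real s / (L / l) \<le> (1 - e) * L / (L / l)"
            using ys lpos by (intro divide_right_mono) auto
          moreover have "(1 - e) * L / (L / l) = (1 - e) * l" using lpos b by (auto simp: field_simps)
          moreover have "0 \<le> e * l" using assms(3) l1 by simp
          ultimately show "e * l / 2 \<le> l - y * real s / (L / l)" by (simp add: algebra_simps)
        qed simp
        finally show ?thesis using N2 by simp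
      qed
      hence "2 * real N \<le> real n0 * real (bb choose s) / real (N choose s)"
        using ratio_bound[OF CN br _ q0 qr] by blast
      thus ?thesis unfolding bb_def by blast
    qed
  qed
  show ?thesis using choosable_LB[OF s1 sN H] unfolding s_def .
qed



lemma per_m:
  fixes n0 n1 :: nat and e :: real
  assumes n: "2 \<le> n0" "n0 \<le> n1" and e: "0 < e" "e \<le> 1/2"
    and hL: "14 / (1 - 2 powr (-e/2)) \<le> log 2 (real n1)"
    and hl: "6 * log 2 (log 2 (real n1)) \<le> e * log 2 (real n0)"
  shows "\<bar>real (ch_Kbip n0 n1) / (log 2 (real n1) / log 2 (root_x0 (log 2 (real n1) / log 2 (real n0)))) - 1\<bar>
          \<le> e + e / 18"
proof -
  define L where "L = log 2 (real n1)"
  define l where "l = log 2 (real n0)"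
  define y where "y = log 2 (root_x0 (L / l))"
  note b = basic_m[OF n, folded L_def l_def, folded y_def]
  have y1: "1 \<le> y" and yL: "y \<le> L / l" and l1: "1 \<le> l" and lL: "l \<le> L"
    using b unfolding y_def by auto
  define d where "d = 1 - 2 powr (-e/2)"
  have "2 powr (-e/2) < 2 powr 0" using e by (intro powr_less_mono) auto
  hence d: "0 < d" "d \<le> 1" unfolding d_def by auto
  have "14 \<le> 14 / d" using d by (simp add: field_simps)
  hence L14: "14 \<le> L" using hL unfolding L_def d_def by simp
  have "log 2 8 \<le> log 2 L" using L14 by simp
  moreover have "log 2 (8::real) = 3"
  proof -
    have "(2::real) powr 3 = 8" by (simp add: powr_numeral)
    thus ?thesis using log_powr_cancel[of 2 3] by simp
  qed
  ultimately have lL3: "3 \<le> log 2 L" by simp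
  have el: "18 \<le> e * l" using hl lL3 unfolding L_def l_def by linarith
  have "4 \<le> e * log 2 (real n0)" using el unfolding l_def by simp
  note up = upper_m[OF n e(1) this, folded L_def l_def, folded y_def]
  note lo = lower_m[OF n e hL hl, folded L_def l_def, folded y_def]
  define s' where "s' = nat \<lceil>(1 + e) * L / y\<rceil>"
  define s where "s = nat \<lfloor>(1 - e) * L / y\<rfloor>"
  define c where "c = ch_Kbip n0 n1"
  have cs': "c \<le> s'" unfolding c_def ch_Kbip_def choice_number_def s'_def
    using up by (rule Least_le)
  have cch: "choosable (Kbip_V n0 n1) Kbip_E c" unfolding c_def ch_Kbip_def choice_number_def
    using up by (rule LeastI)
  have cs: "s < c"
  proof (rule ccontr)
    assume "\<not> s < c"
    hence "choosable (Kbip_V n0 n1) Kbip_E s" using choosable_mono[OF cch] by simp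
    thus False using lo unfolding s_def by simp
  qed
  have Lpos: "0 < L" using L14 by simp
  have ypos: "0 < y" using y1 by simp
  have z0: "0 \<le> (1 - e) * L / y" using e Lpos ypos by simp
  have "(1 - e) * L / y < real s + 1" unfolding s_def using z0 by linarith
  also have "\<dots> \<le> real c" using cs by simp
  finally have lowc: "(1 - e) * L / y < real c" .
  have "real c \<le> real s'" using cs' by simp
  also have "\<dots> \<le> (1 + e) * L / y + 1" unfolding s'_def
  proof -
    have "0 \<le> (1 + e) * L / y" using e Lpos ypos by simp
    thus "real (nat \<lceil>(1 + e) * L / y\<rceil>) \<le> (1 + e) * L / y + 1"
      using ceiling_correct[of "(1 + e) * L / y"] by linarith
  qed
  finally have upc: "real c \<le> (1 + e) * L / y + 1" .
  define R where "R = real c / (L / y)"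
  have Req: "R = real c * y / L" unfolding R_def by simp
  have R1: "1 - e < R" unfolding Req using lowc Lpos ypos by (simp add: field_simps)
  have "R \<le> ((1 + e) * L / y + 1) * y / L" unfolding Req using upc Lpos ypos
    by (intro divide_right_mono mult_right_mono) auto
  also have "\<dots> = 1 + e + y / L" using Lpos ypos by (simp add: field_simps)
  also have "y / L \<le> 1 / l" using yL l1 Lpos by (simp add: field_simps)
  also have "1 / l \<le> e / 18" using el l1 e by (simp add: field_simps)
  finally have R2: "R \<le> 1 + (e + e / 18)" by simp
  have "\<bar>R - 1\<bar> \<le> e + e / 18" using R1 R2 e by linarith
  thus ?thesis unfolding R_def c_def L_def l_def y_def .
qed



theorem theorem1:
  fixes n0 n1 :: "nat \<Rightarrow> nat"
  assumes "\<forall>m. 2 \<le> n0 m \<and> n0 m \<le> n1 m"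
    and "filterlim n1 at_top sequentially"
    and "filterlim (\<lambda>m. log 2 (real (n0 m)) / log 2 (log 2 (real (n1 m)))) at_top sequentially"
  shows "(\<lambda>m. real (ch_Kbip (n0 m) (n1 m)) /
              (log 2 (real (n1 m)) /
               log 2 (root_x0 (log 2 (real (n1 m)) / log 2 (real (n0 m))))))
         \<longlonglongrightarrow> 1"
  unfolding tendsto_iff dist_real_def
proof (intro allI impI)
  fix r :: real assume r: "0 < r"
  define e where "e = min (1/2) (r/2)"
  have e: "0 < e" "e \<le> 1/2" "e + e/18 < r" unfolding e_def using r by auto
  define d where "d = 1 - 2 powr (-e/2)"
  have "2 powr (-e/2) < 2 powr 0" using e by (intro powr_less_mono) auto
  hence d: "0 < d" "d \<le> 1" unfolding d_def by auto
  have ev1: "eventually (\<lambda>m. nat \<lceil>2 powr (14/d)\<rceil> \<le> n1 m) sequentially"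
    using assms(2) filterlim_at_top by blast
  have ev2: "eventually (\<lambda>m. 6/e \<le> log 2 (real (n0 m)) / log 2 (log 2 (real (n1 m)))) sequentially"
    using assms(3) unfolding filterlim_at_top by (rule allE)
  show "eventually (\<lambda>m. \<bar>real (ch_Kbip (n0 m) (n1 m)) /
              (log 2 (real (n1 m)) /
               log 2 (root_x0 (log 2 (real (n1 m)) / log 2 (real (n0 m))))) - 1\<bar> < r) sequentially"
    using ev1 ev2
  proof eventually_elim
    case (elim m)
    have n: "2 \<le> n0 m" "n0 m \<le> n1 m" using assms(1) by auto
    have "2 powr (14/d) \<le> real (nat \<lceil>2 powr (14/d)\<rceil>)" by linarith
    also have "\<dots> \<le> real (n1 m)" using elim(1) by (simp only: of_nat_le_iff)
    finally have "2 powr (14/d) \<le> real (n1 m)" .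
    hence hL: "14 / (1 - 2 powr (-e/2)) \<le> log 2 (real (n1 m))" unfolding d_def[symmetric]
      using n by (subst le_log_iff) auto
    have "14 \<le> 14 / d" using d by (simp add: field_simps)
    hence L14: "14 \<le> log 2 (real (n1 m))" using hL unfolding d_def by simp
    have "0 < log 2 (log 2 (real (n1 m)))" using L14 by simp
    hence hl: "6 * log 2 (log 2 (real (n1 m))) \<le> e * log 2 (real (n0 m))"
      using elim(2) e by (simp add: field_simps)
    have "\<bar>real (ch_Kbip (n0 m) (n1 m)) /
              (log 2 (real (n1 m)) /
               log 2 (root_x0 (log 2 (real (n1 m)) / log 2 (real (n0 m))))) - 1\<bar> \<le> e + e / 18"
      by (rule per_m[OF n e(1,2) hL hl])
    thus ?case using e by linarith
  qed
qed

end
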